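(* Let $r,n,\delta\ge 2$ be natural numbers, let $m := \max\{\binom{rn-1}{r-1}n^2, \delta\}$ and $N := \binom{m-1}{n-1}$. Let $G$ be the graph with vertices $v_{i,j,k}$ for $i\in[n]$, $j\in[N]$, $k\in[m]$, and vertices $s_{i,X}$ for $i\in[n]$ and $X\subseteq[m]$ with $|X|=n$, whose edges are: $v_{i,j,k}v_{i',j',k'}$ whenever $i\neq i'$ and $k=k'$; and $s_{i,X}v_{i,j,k}$ whenever $k\in X$ (for all $j\in[N]$). Then $\chi_r(G)=rn$.
   Context: $[t]=\{1,\dots,t\}$. There are no other edges in $G$ than those listed. A proper $k$-colouring of a graph $G$ is a map $c\colon V(G)\to[k]$ with $c(u)\neq c(v)$ for every edge $uv$. An $r$-dynamic $k$-colouring is a proper $k$-colouring $c$ such that for every vertex $v$, $|c(N(v))|\ge\min\{r,d(v)\}$, where $N(v)$ is the neighbourhood and $d(v)$ the degree of $v$. $\chi_r(G)$ is the least $k$ for which $G$ has an $r$-dynamic $k$-colouring. *)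

theory Defs
  imports Main
begin

text \<open>A graph is given by a vertex set Vs and a symmetric irreflexive adjacency relation E.\<close>

definition nbhd :: "'a set \<Rightarrow> ('a \<Rightarrow> 'a \<Rightarrow> bool) \<Rightarrow> 'a \<Rightarrow> 'a set" where
  "nbhd Vs E v = {u \<in> Vs. E v u}"

definition degree :: "'a set \<Rightarrow> ('a \<Rightarrow> 'a \<Rightarrow> bool) \<Rightarrow> 'a \<Rightarrow> nat" where
  "degree Vs E v = card (nbhd Vs E v)"

definition proper_colouring :: "'a set \<Rightarrow> ('a \<Rightarrow> 'a \<Rightarrow> bool) \<Rightarrow> nat \<Rightarrow> ('a \<Rightarrow> nat) \<Rightarrow> bool" where
  "proper_colouring Vs E k c \<longleftrightarrow>
     c ` Vs \<subseteq> {1..k} \<and> (\<forall>u\<in>Vs. \<forall>v\<in>Vs. E u v \<longrightarrow> c u \<noteq> c v)"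

definition r_dynamic_colouring ::
  "'a set \<Rightarrow> ('a \<Rightarrow> 'a \<Rightarrow> bool) \<Rightarrow> nat \<Rightarrow> nat \<Rightarrow> ('a \<Rightarrow> nat) \<Rightarrow> bool" where
  "r_dynamic_colouring Vs E r k c \<longleftrightarrow>
     proper_colouring Vs E k c \<and>
     (\<forall>v\<in>Vs. card (c ` nbhd Vs E v) \<ge> min r (degree Vs E v))"

definition dyn_chromatic :: "'a set \<Rightarrow> ('a \<Rightarrow> 'a \<Rightarrow> bool) \<Rightarrow> nat \<Rightarrow> nat" where
  "dyn_chromatic Vs E r = (LEAST k. \<exists>c. r_dynamic_colouring Vs E r k c)"

datatype vert = Vv nat nat nat | Sv nat "nat set"

definition G_verts :: "nat \<Rightarrow> nat \<Rightarrow> nat \<Rightarrow> vert set" where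
  "G_verts n N m =
     {Vv i j k | i j k. i \<in> {1..n} \<and> j \<in> {1..N} \<and> k \<in> {1..m}} \<union>
     {Sv i X | i X. i \<in> {1..n} \<and> X \<subseteq> {1..m} \<and> card X = n}"

fun G_adj0 :: "vert \<Rightarrow> vert \<Rightarrow> bool" where
  "G_adj0 (Vv i j k) (Vv i' j' k') = (i \<noteq> i' \<and> k = k')"
| "G_adj0 (Sv i X) (Vv i' j k) = (i = i' \<and> k \<in> X)"
| "G_adj0 _ _ = False"

definition G_adj :: "vert \<Rightarrow> vert \<Rightarrow> bool" where
  "G_adj u v \<longleftrightarrow> G_adj0 u v \<or> G_adj0 v u"

end

theory Submission
  imports Defs
begin

lemma choose_ge: "0 < b \<Longrightarrow> b < a \<Longrightarrow> a \<le> a choose b"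
proof (induction a arbitrary: b)
  case 0 then show ?case by simp
next
  case (Suc a)
  then obtain b' where b: "b = Suc b'" by (cases b) auto
  show ?case
  proof (cases "b' = 0")
    case True then show ?thesis using b by simp
  next
    case False
    then have "a \<le> a choose b'" using Suc b by auto
    moreover have "0 < a choose Suc b'" using Suc b by simp
    ultimately have "Suc a \<le> (a choose b') + (a choose Suc b')" by linarith
    then show ?thesis using b by simp
  qed
qed

lemma nbhd_Sv:
  assumes "i \<in> {1..n}" "X \<subseteq> {1..m}"
  shows "nbhd (G_verts n N m) G_adj (Sv i X) = (\<lambda>(j,k). Vv i j k) ` ({1..N} \<times> X)"
proof (rule set_eqI)
  fix u show "u \<in> nbhd (G_verts n N m) G_adj (Sv i X) \<longleftrightarrow> u \<in> (\<lambda>(j,k). Vv i j k) ` ({1..N} \<times> X)"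
    using assms by (cases u) (auto simp: nbhd_def G_verts_def G_adj_def)
qed

lemma Vv_in: "i \<in> {1..n} \<Longrightarrow> j \<in> {1..N} \<Longrightarrow> k \<in> {1..m} \<Longrightarrow> Vv i j k \<in> G_verts n N m"
  by (auto simp: G_verts_def)

lemma Sv_in: "i \<in> {1..n} \<Longrightarrow> X \<subseteq> {1..m} \<Longrightarrow> card X = n \<Longrightarrow> Sv i X \<in> G_verts n N m"
  by (auto simp: G_verts_def)

lemma N_ge:
  fixes r n \<delta> m N :: nat
  assumes "r \<ge> 2" and "n \<ge> 2"
  and "m \<ge> ((r * n - 1) choose (r - 1)) * n ^ 2"
  shows "r \<le> (m - 1) choose (n - 1)"
proof -
  have "r*n \<ge> 2*r" using assms by simp
  have B: "r*n - 1 \<le> (r * n - 1) choose (r - 1)"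
    by (rule choose_ge) (use assms \<open>r*n \<ge> 2*r\<close> in linarith)+
  have "n^2 \<ge> 4" using assms power_mono[of 2 n 2] by simp
  then have "m \<ge> (r*n-1)*4" using B assms(3) by (meson le_trans mult_le_mono)
  then have m: "m \<ge> 4*(r*n) - 4" by simp
  have "r*n \<ge> 2*n" using assms by simp
  have "m - 1 \<le> (m - 1) choose (n - 1)"
    by (rule choose_ge) (use assms m \<open>r*n \<ge> 2*n\<close> in linarith)+
  moreover have "r \<le> m - 1" using m assms \<open>r*n \<ge> 2*r\<close> \<open>r*n \<ge> 2*n\<close> by linarith
  ultimately show ?thesis by linarith
qed

lemma lower:
  fixes r n m N K :: nat and c :: "vert \<Rightarrow> nat"
  assumes r2: "r \<ge> 2" and n2: "n \<ge> 2" and Nr: "N \<ge> r"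
    and mB: "n*((n-1)*((r*n-1) choose (r-1))) < m"
    and dyn: "r_dynamic_colouring (G_verts n N m) G_adj r K c"
  shows "r*n \<le> K"
proof (rule ccontr)
  assume "\<not> r*n \<le> K" hence K: "K \<le> r*n-1" by simp
  let ?V = "G_verts n N m"
  from dyn have col: "c ` ?V \<subseteq> {1..K}"
    and prp: "\<forall>u\<in>?V. \<forall>v\<in>?V. G_adj u v \<longrightarrow> c u \<noteq> c v"
    and dy: "\<forall>v\<in>?V. card (c ` nbhd ?V G_adj v) \<ge> min r (degree ?V G_adj v)"
    unfolding r_dynamic_colouring_def proper_colouring_def by auto
  define C where "C i k = c ` ((\<lambda>j. Vv i j k) ` {1..N})" for i k
  define B where "B = (r*n-1) choose (r-1)"
  define U where "U = {1..r*n-1}"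
  define S where "S = {T. T \<subseteq> U \<and> card T = r-1}"
  have finU: "finite U" unfolding U_def by simp
  have cardS: "card S = B" unfolding S_def B_def U_def using n_subsets[of "{1..r*n-1}" "r-1"] by simp
  have finS: "finite S" unfolding S_def using finU by (simp add: finite_Collect_subsets)
  have finC: "finite (C i k)" for i k unfolding C_def by simp
  have CU: "C i k \<subseteq> U" if "i\<in>{1..n}" "k\<in>{1..m}" for i k
    using col K that Vv_in[of i n _ N k m] unfolding C_def U_def by force
  define Bad where "Bad i = {k\<in>{1..m}. card (C i k) < r}" for i
  have finBad: "finite (Bad i)" for i unfolding Bad_def by simp
  have bad: "card (Bad i) \<le> (n-1)*B" if i: "i \<in> {1..n}" for i
  proof (rule ccontr)
    assume nb: "\<not> ?thesis"
    have ex: "\<exists>T. C i k \<subseteq> T \<and> T \<subseteq> U \<and> card T = r-1" if "k \<in> Bad i" for k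
    proof (rule exists_subset_between)
      show "card (C i k) \<le> r - 1" using that unfolding Bad_def by auto
      show "r - 1 \<le> card U" unfolding U_def using r2 n2 by (simp add: le_diff_conv2)
      show "C i k \<subseteq> U" using that CU i unfolding Bad_def by auto
      show "finite U" by (rule finU)
    qed
    define f where "f k = (SOME T. C i k \<subseteq> T \<and> T \<subseteq> U \<and> card T = r-1)" for k
    have f: "C i k \<subseteq> f k \<and> f k \<in> S" if "k \<in> Bad i" for k
      using someI_ex[OF ex[OF that]] unfolding f_def S_def by auto
    have "\<exists>T\<in>S. n \<le> card {k\<in>Bad i. f k = T}"
    proof (rule ccontr)
      assume "\<not> ?thesis" hence le: "\<forall>T\<in>S. card {k\<in>Bad i. f k = T} \<le> n-1" by auto
      have "Bad i \<subseteq> (\<Union>T\<in>S. {k\<in>Bad i. f k = T})" using f by auto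
      hence "card (Bad i) \<le> card (\<Union>T\<in>S. {k\<in>Bad i. f k = T})"
        by (rule card_mono[rotated]) (use finS finBad in auto)
      also have "\<dots> \<le> (\<Sum>T\<in>S. card {k\<in>Bad i. f k = T})" by (rule card_UN_le[OF finS])
      also have "\<dots> \<le> card S * (n-1)" using sum_bounded_above[of S "\<lambda>T. card {k\<in>Bad i. f k = T}" "n-1"] le by simp
      finally show False using nb cardS by (simp add: mult.commute)
    qed
    then obtain T where T: "T \<in> S" "n \<le> card {k\<in>Bad i. f k = T}" by blast
    then obtain X where X: "X \<subseteq> {k\<in>Bad i. f k = T}" "card X = n" by (metis obtain_subset_with_card_n)
    have Xm: "X \<subseteq> {1..m}" using X unfolding Bad_def by auto
    have sV: "Sv i X \<in> ?V" using Sv_in[OF i Xm X(2)] .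
    have nbh: "nbhd ?V G_adj (Sv i X) = (\<lambda>(j,k). Vv i j k) ` ({1..N} \<times> X)" by (rule nbhd_Sv[OF i Xm])
    have "c ` nbhd ?V G_adj (Sv i X) \<subseteq> T"
    proof
      fix x assume "x \<in> c ` nbhd ?V G_adj (Sv i X)"
      then obtain j k where jk: "j \<in> {1..N}" "k \<in> X" "x = c (Vv i j k)" using nbh by auto
      then have "x \<in> C i k" unfolding C_def by auto
      moreover have "C i k \<subseteq> T" using f[of k] jk X by auto
      ultimately show "x \<in> T" by auto
    qed
    moreover have "finite T" "card T = r-1" using T finU unfolding S_def by (auto intro: finite_subset)
    ultimately have c1: "card (c ` nbhd ?V G_adj (Sv i X)) \<le> r-1" by (metis card_mono)
    have "X \<noteq> {}" using X n2 by auto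
    then obtain k0 where k0: "k0 \<in> X" by auto
    have finX: "finite X" using Xm finite_subset by auto
    have "(\<lambda>j. Vv i j k0) ` {1..N} \<subseteq> nbhd ?V G_adj (Sv i X)" using nbh k0 by auto
    moreover have "finite (nbhd ?V G_adj (Sv i X))" using nbh finX by simp
    ultimately have "card ((\<lambda>j. Vv i j k0) ` {1..N}) \<le> degree ?V G_adj (Sv i X)"
      unfolding degree_def by (rule card_mono[rotated])
    moreover have "card ((\<lambda>j. Vv i j k0) ` {1..N}) = N" by (subst card_image) (auto simp: inj_on_def)
    ultimately have "r \<le> degree ?V G_adj (Sv i X)" using Nr by simp
    then show False using dy sV c1 r2 by fastforce
  qed
  have "card (\<Union>i\<in>{1..n}. Bad i) \<le> (\<Sum>i\<in>{1..n}. card (Bad i))" by (rule card_UN_le) simp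
  also have "\<dots> \<le> n * ((n-1)*B)" using sum_bounded_above[of "{1..n}" "\<lambda>i. card (Bad i)" "(n-1)*B"] bad by simp
  finally have cu: "card (\<Union>i\<in>{1..n}. Bad i) < m" using mB unfolding B_def by simp
  have "\<not> {1..m} \<subseteq> (\<Union>i\<in>{1..n}. Bad i)"
  proof
    assume "{1..m} \<subseteq> (\<Union>i\<in>{1..n}. Bad i)"
    then have "card {1..m} \<le> card (\<Union>i\<in>{1..n}. Bad i)" by (rule card_mono[rotated]) (simp add: finBad)
    then show False using cu by simp
  qed
  then obtain k where k: "k \<in> {1..m}" "\<And>i. i \<in> {1..n} \<Longrightarrow> k \<notin> Bad i" by blast
  have good: "r \<le> card (C i k)" if "i\<in>{1..n}" for i 
  proof - have "k \<notin> Bad i" using k(2)[OF that] . then show ?thesis using k(1) unfolding Bad_def by simp qed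
  have disj: "C i k \<inter> C i' k = {}" if "i\<in>{1..n}" "i'\<in>{1..n}" "i\<noteq>i'" for i i'
  proof -
    { fix x assume "x \<in> C i k" "x \<in> C i' k"
      then obtain j j' where jj: "j\<in>{1..N}" "j'\<in>{1..N}" "x = c (Vv i j k)" "x = c (Vv i' j' k)"
        unfolding C_def by auto
      have "G_adj (Vv i j k) (Vv i' j' k)" using that unfolding G_adj_def by simp
      moreover have "Vv i j k \<in> ?V" "Vv i' j' k \<in> ?V"
        using Vv_in[OF that(1) jj(1) k(1)] Vv_in[OF that(2) jj(2) k(1)] by auto
      ultimately have "c (Vv i j k) \<noteq> c (Vv i' j' k)" using prp by blast
      then have False using jj by simp }
    then show ?thesis by blast
  qed
  have "card (\<Union>i\<in>{1..n}. C i k) = (\<Sum>i\<in>{1..n}. card (C i k))"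
    by (rule card_UN_disjoint) (use finC disj in auto)
  also have "\<dots> \<ge> n * r" using sum_bounded_below[of "{1..n}" r "\<lambda>i. card (C i k)"] good by simp
  finally have ge: "n*r \<le> card (\<Union>i\<in>{1..n}. C i k)" .
  have "(\<Union>i\<in>{1..n}. C i k) \<subseteq> {1..K}" 
  proof
    fix x assume "x \<in> (\<Union>i\<in>{1..n}. C i k)"
    then obtain i j where "i \<in> {1..n}" "j \<in> {1..N}" "x = c (Vv i j k)" unfolding C_def by auto
    then show "x \<in> {1..K}" using col Vv_in[of i n j N k m] k(1) by auto
  qed
  then have "card (\<Union>i\<in>{1..n}. C i k) \<le> K" by (metis card_atLeastAtMost card_mono finite_atLeastAtMost diff_Suc_1)
  moreover have "n*r \<ge> 2*2" using n2 r2 by (rule mult_le_mono)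
  ultimately show False using ge K by (simp add: mult.commute)
qed


definition colr :: "nat \<Rightarrow> nat \<Rightarrow> vert \<Rightarrow> nat" where
  "colr r n v = (case v of Vv i j k \<Rightarrow> (i-1)*r + (j-1) mod r + 1 | Sv i X \<Rightarrow> (i mod n)*r + 1)"

lemma blk: "0 < r \<Longrightarrow> t < r \<Longrightarrow> (a*r + t) div r = a" for a t r :: nat
  by simp

lemma blk_V: "0 < r \<Longrightarrow> (colr r n (Vv i j k) - 1) div r = i - 1"
  unfolding colr_def by simp

lemma blk_S: "0 < r \<Longrightarrow> (colr r n (Sv i X) - 1) div r = i mod n"
  unfolding colr_def by simp

lemma block_sub:
  fixes a r :: nat
  assumes "\<And>t. t < r \<Longrightarrow> a*r + t + 1 \<in> A" "finite A"
  shows "r \<le> card A"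
proof -
  have "{a*r+1..a*r+r} \<subseteq> A"
  proof
    fix x assume "x \<in> {a*r+1..a*r+r}"
    then have "x = a*r + (x - a*r - 1) + 1" "x - a*r - 1 < r" by auto
    then show "x \<in> A" using assms(1)[of "x - a*r - 1"] by metis
  qed
  then have "card {a*r+1..a*r+r} \<le> card A" using assms(2) by (rule card_mono[rotated])
  then show ?thesis by simp
qed

lemma upper:
  fixes r n m N :: nat
  assumes r2: "r \<ge> 2" and n2: "n \<ge> 2" and Nr: "N \<ge> r"
  shows "r_dynamic_colouring (G_verts n N m) G_adj r (r*n) (colr r n)"
proof -
  let ?V = "G_verts n N m" and ?c = "colr r n"
  have r0: "0 < r" using r2 by simp
  have range: "?c ` ?V \<subseteq> {1..r*n}"
  proof
    fix x assume "x \<in> ?c ` ?V"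
    then obtain v where v: "v \<in> ?V" "x = ?c v" by auto
    show "x \<in> {1..r*n}"
    proof (cases v)
      case (Vv i j k)
      then have i: "1 \<le> i" "i \<le> n" using v by (auto simp: G_verts_def)
      have "(j-1) mod r < r" using r0 by simp
      then have "(i-1)*r + (j-1) mod r + 1 \<le> (i-1)*r + r" by linarith
      also have "\<dots> = i*r" using i by (cases i) auto
      also have "\<dots> \<le> n*r" using i by simp
      finally show ?thesis using v Vv by (simp add: colr_def mult.commute)
    next
      case (Sv i X)
      have "i mod n < n" using n2 by simp
      then have "i mod n + 1 \<le> n" by simp
      then have "(i mod n + 1) * r \<le> n * r" by (rule mult_le_mono1)
      then have "(i mod n)*r + 1 \<le> n*r" using r0 by (simp add: algebra_simps)
      then show ?thesis using v Sv by (simp add: colr_def mult.commute)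
    qed
  qed
  have proper: "\<forall>u\<in>?V. \<forall>v\<in>?V. G_adj u v \<longrightarrow> ?c u \<noteq> ?c v"
  proof (intro ballI impI)
    fix u v assume uv: "u \<in> ?V" "v \<in> ?V" "G_adj u v"
    have ne: "i mod n \<noteq> i - 1" if "1 \<le> i" "i \<le> n" for i
    proof (cases "i = n")
      case True then show ?thesis using n2 by simp
    next
      case False then show ?thesis using that by simp
    qed
    show "?c u \<noteq> ?c v"
    proof
      assume eq: "?c u = ?c v"
      show False
      proof (cases u; cases v)
        fix i j k i' j' k' assume u: "u = Vv i j k" and v: "v = Vv i' j' k'"
        have "i \<noteq> i'" using uv u v by (auto simp: G_adj_def)
        moreover have "1 \<le> i" "1 \<le> i'" using uv u v by (auto simp: G_verts_def)
        moreover have "i - 1 = i' - 1" using eq blk_V[OF r0] u v by metis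
        ultimately show False by simp
      next
        fix i j k i' X assume u: "u = Vv i j k" and v: "v = Sv i' X"
        have "i = i'" using uv u v by (auto simp: G_adj_def)
        moreover have "1 \<le> i" "i \<le> n" using uv u by (auto simp: G_verts_def)
        moreover have "i - 1 = i' mod n" using eq blk_V[OF r0] blk_S[OF r0] u v by metis
        ultimately show False using ne by metis
      next
        fix i X i' j k assume u: "u = Sv i X" and v: "v = Vv i' j k"
        have "i = i'" using uv u v by (auto simp: G_adj_def)
        moreover have "1 \<le> i'" "i' \<le> n" using uv v by (auto simp: G_verts_def)
        moreover have "i' - 1 = i mod n" using eq blk_V[OF r0] blk_S[OF r0] u v by metis
        ultimately show False using ne by metis
      next
        fix i X i' X' assume u: "u = Sv i X" and v: "v = Sv i' X'"
        then show False using uv by (auto simp: G_adj_def)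
      qed
    qed
  qed
  have dyn: "r \<le> card (?c ` nbhd ?V G_adj v)" if v: "v \<in> ?V" for v
  proof -
    have fin: "finite (?c ` nbhd ?V G_adj v)"
    proof (rule finite_subset)
      show "?c ` nbhd ?V G_adj v \<subseteq> {1..r*n}" using range by (auto simp: nbhd_def)
    qed simp
    show ?thesis
    proof (cases v)
      case (Vv i j k)
      then have i: "1 \<le> i" "i \<le> n" and j: "j \<in> {1..N}" and k: "k \<in> {1..m}" using v by (auto simp: G_verts_def)
      define i' where "i' = i mod n + 1"
      have i': "i' \<in> {1..n}" "i' \<noteq> i" unfolding i'_def
      proof -
        have "i mod n < n" using n2 by simp
        then show "i mod n + 1 \<in> {1..n}" by simp
        show "i mod n + 1 \<noteq> i"
        proof (cases "i = n")
          case True then show ?thesis using n2 by simp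
        next
          case False then show ?thesis using i by simp
        qed
      qed
      show ?thesis
      proof (rule block_sub[where a="i' - 1", OF _ fin])
        fix t assume t: "t < r"
        have w: "Vv i' (t+1) k \<in> ?V" using Vv_in[OF i'(1), of "t+1" N k m] t Nr k by simp
        have "G_adj v (Vv i' (t+1) k)" using Vv i' by (simp add: G_adj_def)
        then have "Vv i' (t+1) k \<in> nbhd ?V G_adj v" using w by (simp add: nbhd_def)
        moreover have "?c (Vv i' (t+1) k) = (i'-1)*r + t + 1" using t by (simp add: colr_def)
        ultimately show "(i'-1)*r + t + 1 \<in> ?c ` nbhd ?V G_adj v" by (metis image_eqI)
      qed
    next
      case (Sv i X)
      then have i: "i \<in> {1..n}" and X: "X \<subseteq> {1..m}" "card X = n" using v by (auto simp: G_verts_def)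
      have "X \<noteq> {}" using X n2 by auto
      then obtain k0 where k0: "k0 \<in> X" by auto
      show ?thesis
      proof (rule block_sub[where a="i - 1", OF _ fin])
        fix t assume t: "t < r"
        have w: "Vv i (t+1) k0 \<in> ?V" using Vv_in[OF i, of "t+1" N k0 m] t Nr k0 X by auto
        have "G_adj v (Vv i (t+1) k0)" using Sv k0 by (simp add: G_adj_def)
        then have "Vv i (t+1) k0 \<in> nbhd ?V G_adj v" using w by (simp add: nbhd_def)
        moreover have "?c (Vv i (t+1) k0) = (i-1)*r + t + 1" using t by (simp add: colr_def)
        ultimately show "(i-1)*r + t + 1 \<in> ?c ` nbhd ?V G_adj v" by (metis image_eqI)
      qed
    qed
  qed
  show ?thesis unfolding r_dynamic_colouring_def proper_colouring_def
    using range proper dyn by (auto intro: le_trans[OF min.cobounded1])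
qed


theorem lemma2p3:
  fixes r n \<delta> m N :: nat
  assumes "r \<ge> 2" and "n \<ge> 2" and "\<delta> \<ge> 2"
  defines "m \<equiv> max (((r * n - 1) choose (r - 1)) * n ^ 2) \<delta>"
  defines "N \<equiv> (m - 1) choose (n - 1)"
  shows "dyn_chromatic (G_verts n N m) G_adj r = r * n"
proof -
  have mge: "m \<ge> ((r * n - 1) choose (r - 1)) * n ^ 2" unfolding m_def by simp
  have Nr: "r \<le> N" unfolding N_def by (rule N_ge[OF assms(1,2) mge])
  have Bpos: "0 < (r * n - 1) choose (r - 1)"
  proof -
    have "r*1 \<le> r*n" using assms by (intro mult_le_mono2) simp
    then have "r - 1 \<le> r*n - 1" by (simp add: diff_le_mono)
    then show ?thesis by simp
  qed
  have "n*((n-1)*((r*n-1) choose (r-1))) < n^2 * ((r*n-1) choose (r-1))"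
    using Bpos assms(2) by (simp add: power2_eq_square)
  moreover have "n^2 * ((r*n-1) choose (r-1)) \<le> m" using mge by (simp add: mult.commute)
  ultimately have mB: "n*((n-1)*((r*n-1) choose (r-1))) < m" by (rule less_le_trans)
  show ?thesis unfolding dyn_chromatic_def
  proof (rule Least_equality)
    show "\<exists>c. r_dynamic_colouring (G_verts n N m) G_adj r (r * n) c"
      using upper[OF assms(1,2) Nr] by blast
    fix K assume "\<exists>c. r_dynamic_colouring (G_verts n N m) G_adj r K c"
    then obtain c where "r_dynamic_colouring (G_verts n N m) G_adj r K c" by blast
    then show "r * n \<le> K" by (rule lower[OF assms(1,2) Nr mB])
  qed
qed

end
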